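(* For every finite graph $G=(V,E)$ with $N$ vertices and every function $f:V\to\mathbb{R}$, the size of a minimum vertex cover of (the underlying undirected graph of) the violation graph $B_{0,f}$ equals $N\cdot\ell_0(f,\mathrm{Lip})$.
   Context: $\mathrm{dist}_G$ is the shortest-path distance; $g$ is Lipschitz if $|g(x)-g(y)|\le\mathrm{dist}_G(x,y)$ for all $x,y$, and $\mathrm{Lip}$ is the set of Lipschitz functions. $\ell_0(f,\mathrm{Lip})=\min_{g\in\mathrm{Lip}}\Pr_x[f(x)\ne g(x)]$ with $x$ uniform in $V$. $VS_f(x,y)=|f(x)-f(y)|-\mathrm{dist}_G(x,y)$ if positive, else $0$; $B_{0,f}$ has an edge $(x,y)$ iff $VS_f(x,y)>0$ and $f(x)<f(y)$. *)

theory Defs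
  imports Complex_Main "HOL-Library.Extended_Real" "HOL-Library.Extended_Nat"
begin

definition graph :: "'a set \<Rightarrow> ('a \<times> 'a) set \<Rightarrow> bool" where
  "graph V E \<longleftrightarrow> finite V \<and> E \<subseteq> V \<times> V \<and> sym E \<and> irrefl E"

definition dist_G :: "('a \<times> 'a) set \<Rightarrow> 'a \<Rightarrow> 'a \<Rightarrow> enat" where
  "dist_G E x y = (INF n \<in> {n. (x, y) \<in> E ^^ n}. enat n)"

definition lipschitz_on_graph :: "'a set \<Rightarrow> ('a \<times> 'a) set \<Rightarrow> ('a \<Rightarrow> real) \<Rightarrow> bool" where
  "lipschitz_on_graph V E g \<longleftrightarrow>
     (\<forall>x\<in>V. \<forall>y\<in>V. ereal \<bar>g x - g y\<bar> \<le> ereal_of_enat (dist_G E x y))"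

definition Lip :: "'a set \<Rightarrow> ('a \<times> 'a) set \<Rightarrow> ('a \<Rightarrow> real) set" where
  "Lip V E = {g. lipschitz_on_graph V E g}"

definition disagree :: "'a set \<Rightarrow> ('a \<Rightarrow> real) \<Rightarrow> ('a \<Rightarrow> real) \<Rightarrow> real" where
  "disagree V f g = real (card {x\<in>V. f x \<noteq> g x}) / real (card V)"

definition ell0 :: "'a set \<Rightarrow> ('a \<times> 'a) set \<Rightarrow> ('a \<Rightarrow> real) \<Rightarrow> real" where
  "ell0 V E f = Min ((\<lambda>g. disagree V f g) ` Lip V E)"

definition VS :: "('a \<times> 'a) set \<Rightarrow> ('a \<Rightarrow> real) \<Rightarrow> 'a \<Rightarrow> 'a \<Rightarrow> ereal" where
  "VS E f x y = (let d = ereal \<bar>f x - f y\<bar> - ereal_of_enat (dist_G E x y)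
                 in if d > 0 then d else 0)"

definition viol_graph :: "'a set \<Rightarrow> ('a \<times> 'a) set \<Rightarrow> ('a \<Rightarrow> real) \<Rightarrow> ('a \<times> 'a) set" where
  "viol_graph V E f = {(x, y). x \<in> V \<and> y \<in> V \<and> VS E f x y > 0 \<and> f x < f y}"

definition vertex_cover :: "'a set \<Rightarrow> ('a \<times> 'a) set \<Rightarrow> 'a set \<Rightarrow> bool" where
  "vertex_cover V B C \<longleftrightarrow> C \<subseteq> V \<and> (\<forall>(x, y)\<in>B. x \<in> C \<or> y \<in> C)"

definition min_vertex_cover :: "'a set \<Rightarrow> ('a \<times> 'a) set \<Rightarrow> nat" where
  "min_vertex_cover V B = Min (card ` {C. vertex_cover V B C})"

end

theory Submission
  imports Defs
begin

lemma relpow_sym: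
  assumes "sym E" shows "(x, y) \<in> E ^^ n \<Longrightarrow> (y, x) \<in> E ^^ n"
proof (induction n arbitrary: x y)
  case 0 then show ?case by simp
next
  case (Suc n)
  then obtain w where w: "(x, w) \<in> E ^^ n" "(w, y) \<in> E" by (meson relpow_Suc_E)
  have "(y, w) \<in> E" using w(2) assms by (meson symD)
  moreover have "(w, x) \<in> E ^^ n" using Suc.IH w(1) by blast
  ultimately show ?case by (rule relpow_Suc_I2)
qed

definition reach :: "('a \<times> 'a) set \<Rightarrow> 'a \<Rightarrow> 'a \<Rightarrow> bool" where
  "reach E x y \<longleftrightarrow> (\<exists>n. (x, y) \<in> E ^^ n)"

definition dn :: "('a \<times> 'a) set \<Rightarrow> 'a \<Rightarrow> 'a \<Rightarrow> nat" where
  "dn E x y = (LEAST n. (x, y) \<in> E ^^ n)"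

lemma dist_G_eq: "dist_G E x y = (if reach E x y then enat (dn E x y) else \<infinity>)"
proof (cases "reach E x y")
  case True
  then obtain n where n: "(x, y) \<in> E ^^ n" unfolding reach_def by blast
  have "dist_G E x y = enat (dn E x y)"
    unfolding dist_G_def dn_def
  proof (rule antisym)
    show "(INF n \<in> {n. (x, y) \<in> E ^^ n}. enat n) \<le> enat (LEAST n. (x, y) \<in> E ^^ n)"
      by (rule INF_lower) (use n in \<open>auto intro: LeastI\<close>)
    show "enat (LEAST n. (x, y) \<in> E ^^ n) \<le> (INF n \<in> {n. (x, y) \<in> E ^^ n}. enat n)"
      by (rule INF_greatest) (auto intro: Least_le)
  qed
  then show ?thesis using True by simp
next
  case False
  then have "{n. (x, y) \<in> E ^^ n} = {}" unfolding reach_def by auto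
  then show ?thesis using False unfolding dist_G_def by (simp add: top_enat_def)
qed

lemma reach_refl: "reach E x x" unfolding reach_def by (rule exI[of _ 0]) simp

lemma dn_refl: "dn E x x = 0" unfolding dn_def by (rule Least_eq_0) simp

lemma reach_dn: "reach E x y \<Longrightarrow> (x, y) \<in> E ^^ dn E x y"
  unfolding reach_def dn_def by (auto intro: LeastI)

lemma dn_le: "(x, y) \<in> E ^^ n \<Longrightarrow> dn E x y \<le> n"
  unfolding dn_def by (rule Least_le)

lemma reach_sym: "sym E \<Longrightarrow> reach E x y \<Longrightarrow> reach E y x"
proof -
  assume "sym E" "reach E x y"
  then obtain n where "(x, y) \<in> E ^^ n" unfolding reach_def by blast
  then have "(y, x) \<in> E ^^ n" using relpow_sym[OF \<open>sym E\<close>] by blast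
  then show ?thesis unfolding reach_def by blast
qed

lemma dn_sym: assumes "sym E" shows "dn E y x = dn E x y"
proof -
  have *: "dn E b a \<le> dn E a b" if "reach E a b" for a b
    using dn_le[OF relpow_sym[OF assms reach_dn[OF that]]] .
  show ?thesis
  proof (cases "reach E x y")
    case True
    then show ?thesis using *[OF True] *[OF reach_sym[OF assms True]] by simp
  next
    case False
    then have "\<not> reach E y x" using reach_sym[OF assms] by blast
    then show ?thesis using False unfolding dn_def reach_def by auto
  qed
qed

lemma reach_trans: "reach E x y \<Longrightarrow> reach E y z \<Longrightarrow> reach E x z \<and> dn E x z \<le> dn E x y + dn E y z"
proof -
  assume a: "reach E x y" "reach E y z"
  have p: "(x, z) \<in> E ^^ (dn E x y + dn E y z)"
    unfolding relpow_add using reach_dn[OF a(1)] reach_dn[OF a(2)] by blast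
  have "dn E x z \<le> dn E x y + dn E y z" by (rule dn_le[OF p])
  then show ?thesis unfolding reach_def using p by blast
qed

lemma lip_iff: "lipschitz_on_graph V E g \<longleftrightarrow>
  (\<forall>x\<in>V. \<forall>y\<in>V. reach E x y \<longrightarrow> \<bar>g x - g y\<bar> \<le> real (dn E x y))"
  unfolding lipschitz_on_graph_def dist_G_eq by auto

lemma VS_pos_iff: "VS E f x y > 0 \<longleftrightarrow> reach E x y \<and> \<bar>f x - f y\<bar> > real (dn E x y)"
  unfolding VS_def dist_G_eq Let_def by auto

theorem claim3p3:
  fixes V :: "'a set" and E :: "('a \<times> 'a) set" and f :: "'a \<Rightarrow> real"
  assumes "graph V E"
  shows "real (min_vertex_cover V (viol_graph V E f)) = real (card V) * ell0 V E f"
proof -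
  have finV: "finite V" and EV: "E \<subseteq> V \<times> V" and symE: "sym E"
    using assms unfolding graph_def by auto
  define B where "B = viol_graph V E f"
  define N where "N = card V"
  define m where "m = min_vertex_cover V B"
  define D where "D = (\<lambda>g. card {x\<in>V. f x \<noteq> g x})"
  have fincov: "finite (card ` {C. vertex_cover V B C})"
  proof (rule finite_subset[of _ "{..N}"])
    show "card ` {C. vertex_cover V B C} \<subseteq> {..N}"
      unfolding N_def vertex_cover_def using finV by (auto intro: card_mono)
  qed simp
  have Vcov: "vertex_cover V B V" unfolding vertex_cover_def B_def viol_graph_def by auto
  have mle: "m \<le> card C" if "vertex_cover V B C" for C
    unfolding m_def min_vertex_cover_def using fincov that by (auto intro: Min_le)
  have "m \<in> card ` {C. vertex_cover V B C}"
    unfolding m_def min_vertex_cover_def using fincov Vcov by (intro Min_in) auto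
  then obtain C0 where C0: "vertex_cover V B C0" "card C0 = m" by auto
  \<comment> \<open>(a) every Lipschitz g yields a cover\<close>
  have a: "m \<le> D g" if "g \<in> Lip V E" for g
  proof -
    have c: "x \<in> {x\<in>V. f x \<noteq> g x} \<or> y \<in> {x\<in>V. f x \<noteq> g x}" if xy: "(x, y) \<in> B" for x y
    proof -
      from xy have xyV: "x \<in> V" "y \<in> V" and r: "reach E x y"
        and gt: "\<bar>f x - f y\<bar> > real (dn E x y)"
        unfolding B_def viol_graph_def VS_pos_iff by auto
      have "\<bar>g x - g y\<bar> \<le> real (dn E x y)"
        using \<open>g \<in> Lip V E\<close> xyV r unfolding Lip_def lip_iff by auto
      then show ?thesis using xyV gt by auto
    qed
    have "vertex_cover V B {x\<in>V. f x \<noteq> g x}"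
      unfolding vertex_cover_def using c by auto
    then show ?thesis unfolding D_def by (rule mle)
  qed
  define A where "A = V - C0"
  have noviol: "\<bar>f y - f y'\<bar> \<le> real (dn E y y')"
    if "y \<in> A" "y' \<in> A" "reach E y y'" for y y'
  proof (rule ccontr)
    assume ng: "\<not> ?thesis"
    have yV: "y \<in> V" "y' \<in> V" "y \<notin> C0" "y' \<notin> C0" using that unfolding A_def by auto
    have r2: "reach E y' y" using reach_sym[OF symE that(3)] .
    have d2: "dn E y' y = dn E y y'" using dn_sym[OF symE] .
    consider "f y < f y'" | "f y' < f y" using ng by linarith
    then show False
    proof cases
      case 1
      then have "(y, y') \<in> B" unfolding B_def viol_graph_def VS_pos_iff using yV that(3) ng by auto
      then show False using C0(1) yV unfolding vertex_cover_def by auto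
    next
      case 2
      then have "(y', y) \<in> B" unfolding B_def viol_graph_def VS_pos_iff
        using yV r2 d2 ng by (auto simp: abs_minus_commute)
      then show False using C0(1) yV unfolding vertex_cover_def by auto
    qed
  qed
  define S where "S = (\<lambda>x. {y\<in>A. reach E x y})"
  have finS: "finite (S x)" for x unfolding S_def A_def using finV by auto
  define g where "g = (\<lambda>x. if S x = {} then 0 else Min ((\<lambda>y. f y + real (dn E x y)) ` S x))"
  have Seq: "S x = S z" if "reach E x z" for x z
  proof -
    have "reach E z x" using reach_sym[OF symE that] .
    have "reach E x y" if "reach E z y" for y using reach_trans[OF \<open>reach E x z\<close> that] by simp
    moreover have "reach E z y" if "reach E x y" for y using reach_trans[OF \<open>reach E z x\<close> that] by simp
    ultimately show ?thesis unfolding S_def by blast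
  qed
  have key: "g x \<le> g z + real (dn E x z)" if kr: "reach E x z" and kS: "S z \<noteq> {}" for x z
  proof -
    have "Min ((\<lambda>y. f y + real (dn E z y)) ` S z) \<in> (\<lambda>y. f y + real (dn E z y)) ` S z"
      using finS kS by (intro Min_in) auto
    then obtain y where y: "y \<in> S z" "g z = f y + real (dn E z y)"
      unfolding g_def using kS by auto
    have yx: "y \<in> S x" using y(1) Seq[OF kr] by simp
    have rzy: "reach E z y" using y(1) unfolding S_def by auto
    have tri: "dn E x y \<le> dn E x z + dn E z y" using reach_trans[OF kr rzy] by blast
    have "g x \<le> f y + real (dn E x y)"
      unfolding g_def using yx finS by (auto intro: Min_le)
    also have "\<dots> \<le> g z + real (dn E x z)" using y(2) tri by linarith
    finally show ?thesis .
  qed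
  have glip: "g \<in> Lip V E"
    unfolding Lip_def lip_iff
  proof (intro CollectI ballI impI)
    fix x z assume "x \<in> V" "z \<in> V" and r: "reach E x z"
    have r2: "reach E z x" using reach_sym[OF symE r] .
    show "\<bar>g x - g z\<bar> \<le> real (dn E x z)"
    proof (cases "S z = {}")
      case True
      then have "S x = {}" using Seq[OF r] by simp
      then show ?thesis using True unfolding g_def by simp
    next
      case False
      then have "S x \<noteq> {}" using Seq[OF r] by simp
      then show ?thesis using key[OF r False] key[OF r2] dn_sym[OF symE, of x z] by auto
    qed
  qed
  have gA: "g x = f x" if "x \<in> A" for x
  proof -
    have xS: "x \<in> S x" using that reach_refl unfolding S_def by auto
    then have ne: "S x \<noteq> {}" by auto
    have "g x \<le> f x + real (dn E x x)" unfolding g_def using ne xS finS by (auto intro: Min_le)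
    then have le: "g x \<le> f x" by (simp add: dn_refl)
    have "Min ((\<lambda>y. f y + real (dn E x y)) ` S x) \<in> (\<lambda>y. f y + real (dn E x y)) ` S x"
      using finS ne by (intro Min_in) auto
    then obtain y where y: "y \<in> S x" "g x = f y + real (dn E x y)"
      unfolding g_def using ne by auto
    have "\<bar>f x - f y\<bar> \<le> real (dn E x y)" using noviol[OF that] y(1) unfolding S_def by auto
    then have "f x \<le> g x" using y(2) by linarith
    then show ?thesis using le by simp
  qed
  have Dg: "D g = m"
  proof -
    have "{x\<in>V. f x \<noteq> g x} \<subseteq> C0" using gA unfolding A_def by force
    then have "D g \<le> m" unfolding D_def using C0 finV
      by (metis (no_types, lifting) card_mono finite_subset vertex_cover_def)
    then show ?thesis using a[OF glip] by simp
  qed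
  show ?thesis
  proof (cases "N = 0")
    case True
    then have "m = 0" using mle[OF Vcov] unfolding N_def by simp
    then show ?thesis using True unfolding m_def B_def N_def by simp
  next
    case False
    have "ell0 V E f = real m / real N"
      unfolding ell0_def
    proof (rule Min_eqI)
      show "finite ((\<lambda>g. disagree V f g) ` Lip V E)"
      proof (rule finite_subset[of _ "(\<lambda>k. real k / real N) ` {..N}"])
        show "(\<lambda>g. disagree V f g) ` Lip V E \<subseteq> (\<lambda>k. real k / real N) ` {..N}"
          unfolding disagree_def N_def using finV by (auto intro!: imageI card_mono)
      qed simp
      show "\<And>y. y \<in> (\<lambda>g. disagree V f g) ` Lip V E \<Longrightarrow> real m / real N \<le> y"
        unfolding disagree_def using a unfolding D_def N_def
        by (auto intro!: divide_right_mono)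
      show "real m / real N \<in> (\<lambda>g. disagree V f g) ` Lip V E"
        using glip Dg unfolding disagree_def D_def N_def by auto
    qed
    then show ?thesis using False unfolding m_def B_def N_def by simp
  qed
qed

end
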